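(* Let $G$ be a cograph, let $(T,t)$ be an arbitrary binary cotree of $G$, and let $\sigma$ be a greedy coloring of $G$. Then $\sigma$ is an hc-coloring with respect to $(T,t)$.
   Context: All graphs are finite, simple and undirected. A (proper vertex) coloring of $G=(V,E)$ is a surjective map $\sigma:V\to S$ with $\sigma(x)\neq\sigma(y)$ whenever $xy\in E$. A greedy coloring is a coloring $\sigma:V\to S$ for which there exist a linear order on $S$ and an ordering of $V$ such that processing the vertices in that order, each vertex receives the smallest color of $S$ not already assigned to one of its previously processed neighbors. A cograph is a graph that is $K_1$, or a disjoint union of cographs, or a join of cographs. A cotree $(T,t)$ of a cograph $G$ is a rooted tree $T$ with leaf set $V$ and a labeling $t:V^0(T)\to\{0,1\}$ of its inner vertices such that for every inner vertex $u$, $G(u):=G[L(T(u))]$ (with $L(T(u))$ the leaves descending from $u$) is the disjoint union (if $t(u)=0$) or the join (if $t(u)=1$) of the graphs $G(v)$, $v$ a child of $u$. It is binary if every inner vertex has exactly two children. A coloring $\sigma$ is an hc-coloring with respect to a binary cotree $(T,t)$ if for every inner vertex $u$ with children $v_1,v_2$: if $t(u)=1$ then $\sigma(L(T(v_1)))\cap\sigma(L(T(v_2)))=\emptyset$, and if $t(u)=0$ then one of $\sigma(L(T(v_1)))$, $\sigma(L(T(v_2)))$ contains the other. *)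

theory Defs
  imports Main
begin

type_synonym 'a graph = "'a set \<times> 'a set set"

definition simple_graph :: "'a graph \<Rightarrow> bool" where
  "simple_graph G \<longleftrightarrow> finite (fst G) \<and>
     (\<forall>e\<in>snd G. \<exists>x y. x \<noteq> y \<and> x \<in> fst G \<and> y \<in> fst G \<and> e = {x, y})"

definition induced :: "'a graph \<Rightarrow> 'a set \<Rightarrow> 'a graph" where
  "induced G S = (S, {e \<in> snd G. e \<subseteq> S})"

text \<open>Disjoint union and join of two graphs (on disjoint vertex sets).\<close>
definition gunion :: "'a graph \<Rightarrow> 'a graph \<Rightarrow> 'a graph" where
  "gunion G1 G2 = (fst G1 \<union> fst G2, snd G1 \<union> snd G2)"

definition gjoin :: "'a graph \<Rightarrow> 'a graph \<Rightarrow> 'a graph" where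
  "gjoin G1 G2 = (fst G1 \<union> fst G2,
     snd G1 \<union> snd G2 \<union> {{x, y} | x y. x \<in> fst G1 \<and> y \<in> fst G2})"

inductive cograph :: "'a graph \<Rightarrow> bool" where
  K1: "cograph ({v}, {})"
| union: "cograph G1 \<Longrightarrow> cograph G2 \<Longrightarrow> fst G1 \<inter> fst G2 = {} \<Longrightarrow> cograph (gunion G1 G2)"
| join: "cograph G1 \<Longrightarrow> cograph G2 \<Longrightarrow> fst G1 \<inter> fst G2 = {} \<Longrightarrow> cograph (gjoin G1 G2)"

text \<open>Binary rooted trees with leaves labelled by vertices; inner vertices carry the
  label t(u): True means t(u) = 1 (join), False means t(u) = 0 (disjoint union).\<close>
datatype 'a cotree = Leaf 'a | Inner bool "'a cotree" "'a cotree"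

fun leaves :: "'a cotree \<Rightarrow> 'a set" where
  "leaves (Leaf x) = {x}"
| "leaves (Inner b l r) = leaves l \<union> leaves r"

fun cotree_ok :: "'a graph \<Rightarrow> 'a cotree \<Rightarrow> bool" where
  "cotree_ok G (Leaf x) = True"
| "cotree_ok G (Inner b l r) \<longleftrightarrow>
     leaves l \<inter> leaves r = {} \<and>
     induced G (leaves l \<union> leaves r) =
       (if b then gjoin (induced G (leaves l)) (induced G (leaves r))
        else gunion (induced G (leaves l)) (induced G (leaves r))) \<and>
     cotree_ok G l \<and> cotree_ok G r"

definition binary_cotree :: "'a graph \<Rightarrow> 'a cotree \<Rightarrow> bool" where
  "binary_cotree G T \<longleftrightarrow> leaves T = fst G \<and> cotree_ok G T"

text \<open>Proper coloring; the color set is S = sigma ` V (so sigma is surjective onto S).\<close>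
definition proper_coloring :: "'a graph \<Rightarrow> ('a \<Rightarrow> 'c) \<Rightarrow> bool" where
  "proper_coloring G \<sigma> \<longleftrightarrow> (\<forall>x y. {x, y} \<in> snd G \<longrightarrow> \<sigma> x \<noteq> \<sigma> y)"

definition greedy_coloring :: "'a graph \<Rightarrow> ('a \<Rightarrow> 'c) \<Rightarrow> bool" where
  "greedy_coloring G \<sigma> \<longleftrightarrow> proper_coloring G \<sigma> \<and>
     (\<exists>r vs. linear_order_on (\<sigma> ` fst G) r \<and> distinct vs \<and> set vs = fst G \<and>
       (\<forall>i < length vs.
          let used = {\<sigma> (vs ! j) | j. j < i \<and> {vs ! j, vs ! i} \<in> snd G} in
          \<sigma> (vs ! i) \<notin> used \<and>
          (\<forall>s \<in> \<sigma> ` fst G. (s, \<sigma> (vs ! i)) \<in> r \<and> s \<noteq> \<sigma> (vs ! i) \<longrightarrow> s \<in> used)))"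

fun hc_coloring :: "'a cotree \<Rightarrow> ('a \<Rightarrow> 'c) \<Rightarrow> bool" where
  "hc_coloring (Leaf x) \<sigma> = True"
| "hc_coloring (Inner b l r) \<sigma> \<longleftrightarrow>
     (if b then \<sigma> ` leaves l \<inter> \<sigma> ` leaves r = {}
      else (\<sigma> ` leaves l \<subseteq> \<sigma> ` leaves r \<or> \<sigma> ` leaves r \<subseteq> \<sigma> ` leaves l)) \<and>
     hc_coloring l \<sigma> \<and> hc_coloring r \<sigma>"

end

theory Submission
  imports Defs
begin

lemma cok:
  assumes "cotree_ok G (Inner b l r)"
  shows "leaves l \<inter> leaves r = {}"
    "induced G (leaves l \<union> leaves r) =
       (if b then gjoin (induced G (leaves l)) (induced G (leaves r))
        else gunion (induced G (leaves l)) (induced G (leaves r)))"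
    "cotree_ok G l" "cotree_ok G r"
proof -
  have H: "leaves l \<inter> leaves r = {} \<and>
     induced G (leaves l \<union> leaves r) =
       (if b then gjoin (induced G (leaves l)) (induced G (leaves r))
        else gunion (induced G (leaves l)) (induced G (leaves r))) \<and>
     cotree_ok G l \<and> cotree_ok G r"
    using assms by (simp only: cotree_ok.simps)
  show "leaves l \<inter> leaves r = {}" using H by (rule conjunct1)
  show "induced G (leaves l \<union> leaves r) =
       (if b then gjoin (induced G (leaves l)) (induced G (leaves r))
        else gunion (induced G (leaves l)) (induced G (leaves r)))"
    using H[THEN conjunct2] by (rule conjunct1)
  show "cotree_ok G l" using H[THEN conjunct2, THEN conjunct2] by (rule conjunct1)
  show "cotree_ok G r" using H[THEN conjunct2, THEN conjunct2] by (rule conjunct2)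
qed

lemma adj_child:
  assumes "cotree_ok G (Inner b l r)" "y \<in> leaves l" "z \<in> leaves r"
  shows "{y, z} \<in> snd G \<longleftrightarrow> b"
proof -
  have d: "leaves l \<inter> leaves r = {}" by (rule cok(1)[OF assms(1)])
  have eq: "induced G (leaves l \<union> leaves r) =
       (if b then gjoin (induced G (leaves l)) (induced G (leaves r))
        else gunion (induced G (leaves l)) (induced G (leaves r)))"
    by (rule cok(2)[OF assms(1)])
  show ?thesis
  proof (cases b)
    case True
    have s1: "snd (induced G (leaves l \<union> leaves r)) = snd (gjoin (induced G (leaves l)) (induced G (leaves r)))"
      using eq True by (simp only: if_True)
    have "{y, z} \<in> {{x, y'} | x y'. x \<in> leaves l \<and> y' \<in> leaves r}"
      using assms(2,3) by blast
    then have "{y, z} \<in> snd (gjoin (induced G (leaves l)) (induced G (leaves r)))"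
      unfolding gjoin_def induced_def fst_conv snd_conv by (rule UnI2)
    then have "{y, z} \<in> snd (induced G (leaves l \<union> leaves r))" unfolding s1 .
    then have "{y, z} \<in> snd G" unfolding induced_def snd_conv by blast
    then show ?thesis using True by (simp only: simp_thms)
  next
    case False
    have s1: "snd (induced G (leaves l \<union> leaves r)) = snd (gunion (induced G (leaves l)) (induced G (leaves r)))"
      using eq False by (simp only: if_False)
    then have e: "{e \<in> snd G. e \<subseteq> leaves l \<union> leaves r} =
      {e \<in> snd G. e \<subseteq> leaves l} \<union> {e \<in> snd G. e \<subseteq> leaves r}"
      unfolding gunion_def induced_def fst_conv snd_conv .
    have "{y, z} \<notin> snd G"
    proof
      assume yz: "{y, z} \<in> snd G"
      have "{y, z} \<subseteq> leaves l \<union> leaves r" using assms(2,3) by blast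
      then have "{y, z} \<in> {e \<in> snd G. e \<subseteq> leaves l \<union> leaves r}" using yz by blast
      then have "{y, z} \<in> {e \<in> snd G. e \<subseteq> leaves l} \<union> {e \<in> snd G. e \<subseteq> leaves r}"
        unfolding e .
      then have "{y, z} \<subseteq> leaves l \<or> {y, z} \<subseteq> leaves r" by blast
      then show False using assms(2,3) d by blast
    qed
    then show ?thesis using False by (simp only: simp_thms)
  qed
qed

lemma main:
  assumes pcol: "proper_coloring (V,E) \<sigma>"
    and sg: "simple_graph (V,E)"
    and gr: "\<forall>v\<in>V. \<forall>s\<in>\<sigma>`V. (s,\<sigma> v)\<in>r \<and> s\<noteq>\<sigma> v \<longrightarrow> (\<exists>w. {w,v}\<in>E \<and> \<sigma> w = s)"
    and tot: "\<forall>a\<in>\<sigma>`V. \<forall>b\<in>\<sigma>`V. a\<noteq>b \<longrightarrow> (a,b)\<in>r \<or> (b,a)\<in>r"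
  shows "cotree_ok (V,E) S \<Longrightarrow> leaves S \<subseteq> V \<Longrightarrow>
    (\<forall>z\<in>V - leaves S. (\<forall>y\<in>leaves S. {z,y}\<in>E) \<or> (\<forall>y\<in>leaves S. {z,y}\<notin>E)) \<Longrightarrow> hc_coloring S \<sigma>"
proof (induction S)
  case (Leaf x)
  then show ?case by simp
next
  case (Inner b l r')
  have ok: "cotree_ok (V,E) (Inner b l r')" by fact
  have adj: "\<And>y z. y \<in> leaves l \<Longrightarrow> z \<in> leaves r' \<Longrightarrow> ({y,z} \<in> E \<longleftrightarrow> b)"
    using adj_child[OF ok] by fastforce
  have adj': "\<And>y z. y \<in> leaves l \<Longrightarrow> z \<in> leaves r' \<Longrightarrow> ({z,y} \<in> E \<longleftrightarrow> b)"
    using adj by (simp add: insert_commute)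
  have edgesV: "\<And>w v. {w,v} \<in> E \<Longrightarrow> w \<in> V"
    using sg unfolding simple_graph_def by (metis doubleton_eq_iff fst_conv snd_conv)
  have pc: "\<And>x y. {x,y} \<in> E \<Longrightarrow> \<sigma> x \<noteq> \<sigma> y" using pcol unfolding proper_coloring_def by auto
  have d: "leaves l \<inter> leaves r' = {}" using ok by (rule cok)
  have mod: "\<forall>z\<in>V - leaves (Inner b l r'). (\<forall>y\<in>leaves (Inner b l r'). {z,y}\<in>E) \<or> (\<forall>y\<in>leaves (Inner b l r'). {z,y}\<notin>E)"
    by fact
  have hl: "hc_coloring l \<sigma>"
  proof (rule Inner.IH(1))
    show "cotree_ok (V, E) l" using ok by (rule cok)
    show "leaves l \<subseteq> V" using Inner.prems(2) by simp
    show "\<forall>z\<in>V - leaves l. (\<forall>y\<in>leaves l. {z, y} \<in> E) \<or> (\<forall>y\<in>leaves l. {z, y} \<notin> E)"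
    proof
      fix z assume z: "z \<in> V - leaves l"
      show "(\<forall>y\<in>leaves l. {z, y} \<in> E) \<or> (\<forall>y\<in>leaves l. {z, y} \<notin> E)"
      proof (cases "z \<in> leaves r'")
        case True then show ?thesis using adj' by blast
      next
        case False then show ?thesis using mod z by auto
      qed
    qed
  qed
  have hr: "hc_coloring r' \<sigma>"
  proof (rule Inner.IH(2))
    show "cotree_ok (V, E) r'" using ok by (rule cok)
    show "leaves r' \<subseteq> V" using Inner.prems(2) by simp
    show "\<forall>z\<in>V - leaves r'. (\<forall>y\<in>leaves r'. {z, y} \<in> E) \<or> (\<forall>y\<in>leaves r'. {z, y} \<notin> E)"
    proof
      fix z assume z: "z \<in> V - leaves r'"
      show "(\<forall>y\<in>leaves r'. {z, y} \<in> E) \<or> (\<forall>y\<in>leaves r'. {z, y} \<notin> E)"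
      proof (cases "z \<in> leaves l")
        case True then show ?thesis using adj by blast
      next
        case False then show ?thesis using mod z by auto
      qed
    qed
  qed
  have top: "if b then \<sigma> ` leaves l \<inter> \<sigma> ` leaves r' = {}
      else (\<sigma> ` leaves l \<subseteq> \<sigma> ` leaves r' \<or> \<sigma> ` leaves r' \<subseteq> \<sigma> ` leaves l)"
  proof (cases b)
    case True
    have "\<sigma> ` leaves l \<inter> \<sigma> ` leaves r' = {}"
    proof (rule ccontr)
      assume "\<sigma> ` leaves l \<inter> \<sigma> ` leaves r' \<noteq> {}"
      then obtain y z where "y \<in> leaves l" "z \<in> leaves r'" "\<sigma> y = \<sigma> z" by blast
      then show False using adj[of y z] pc[of y z] True by simp
    qed
    then show ?thesis using True by simp
  next
    case False
    have key: "False" if A: "A = leaves l \<and> B = leaves r' \<or> A = leaves r' \<and> B = leaves l"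
      and x: "x \<in> A" "\<sigma> x \<notin> \<sigma> ` B" and y: "y \<in> B" "\<sigma> y \<notin> \<sigma> ` A"
      and o: "(\<sigma> x, \<sigma> y) \<in> r" for A B x y
    proof -
      have noadj: "{a,c} \<notin> E \<and> {c,a} \<notin> E" if "a \<in> A" "c \<in> B" for a c
        using A
      proof
        assume "A = leaves l \<and> B = leaves r'"
        then show ?thesis using that adj[of a c] adj'[of a c] False by simp
      next
        assume "A = leaves r' \<and> B = leaves l"
        then show ?thesis using that adj[of c a] adj'[of c a] False by simp
      qed
      have yV: "y \<in> V" and xV: "x \<in> V" using A x y Inner.prems(2) by auto
      have ne: "\<sigma> x \<noteq> \<sigma> y" using x y by blast
      obtain w where w: "{w,y} \<in> E" "\<sigma> w = \<sigma> x"
        using gr[rule_format, OF yV, of "\<sigma> x"] xV o ne by blast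
      have wA: "w \<notin> A" using noadj[of w y] w y by blast
      have wB: "w \<notin> B" using w x by (metis image_eqI)
      have wV: "w \<in> V" using edgesV w by blast
      have "w \<in> V - leaves (Inner b l r')" using wA wB wV A by auto
      then have "(\<forall>v\<in>leaves (Inner b l r'). {w,v}\<in>E) \<or> (\<forall>v\<in>leaves (Inner b l r'). {w,v}\<notin>E)"
        using mod by blast
      moreover have "y \<in> leaves (Inner b l r')" "x \<in> leaves (Inner b l r')" using A x y by auto
      ultimately have "{w,x} \<in> E" using w by blast
      then show False using pc w by blast
    qed
    show ?thesis
    proof (rule ccontr)
      assume "\<not> ?thesis"
      then obtain x y where x: "x \<in> leaves l" "\<sigma> x \<notin> \<sigma> ` leaves r'"
        and y: "y \<in> leaves r'" "\<sigma> y \<notin> \<sigma> ` leaves l" using False by auto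
      have "x \<in> V" "y \<in> V" using x y Inner.prems(2) by auto
      moreover have "\<sigma> x \<noteq> \<sigma> y" using x y by blast
      ultimately have "(\<sigma> x, \<sigma> y) \<in> r \<or> (\<sigma> y, \<sigma> x) \<in> r" using tot by blast
      then show False
      proof
        assume "(\<sigma> x, \<sigma> y) \<in> r"
        then show False using key[of "leaves l" "leaves r'" x y] x y by blast
      next
        assume "(\<sigma> y, \<sigma> x) \<in> r"
        then show False using key[of "leaves r'" "leaves l" y x] x y by blast
      qed
    qed
  qed
  show ?case unfolding hc_coloring.simps using top hl hr by blast
qed

theorem lemma5:
  fixes V :: "'a set" and E :: "'a set set" and T :: "'a cotree" and \<sigma> :: "'a \<Rightarrow> 'c"
  assumes "simple_graph (V, E)"
    and "cograph (V, E)"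
    and "binary_cotree (V, E) T"
    and "greedy_coloring (V, E) \<sigma>"
  shows "hc_coloring T \<sigma>"
proof -
  have pc: "proper_coloring (V,E) \<sigma>" using assms(4) unfolding greedy_coloring_def by (rule conjunct1)
  have ex: "\<exists>r vs. linear_order_on (\<sigma> ` V) r \<and> distinct vs \<and> set vs = V \<and>
       (\<forall>i < length vs.
          let used = {\<sigma> (vs ! j) | j. j < i \<and> {vs ! j, vs ! i} \<in> E} in
          \<sigma> (vs ! i) \<notin> used \<and>
          (\<forall>s \<in> \<sigma> ` V. (s, \<sigma> (vs ! i)) \<in> r \<and> s \<noteq> \<sigma> (vs ! i) \<longrightarrow> s \<in> used))"
    using assms(4) by (simp only: greedy_coloring_def fst_conv snd_conv)
  then obtain r where "\<exists>vs. linear_order_on (\<sigma> ` V) r \<and> distinct vs \<and> set vs = V \<and>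
       (\<forall>i < length vs.
          let used = {\<sigma> (vs ! j) | j. j < i \<and> {vs ! j, vs ! i} \<in> E} in
          \<sigma> (vs ! i) \<notin> used \<and>
          (\<forall>s \<in> \<sigma> ` V. (s, \<sigma> (vs ! i)) \<in> r \<and> s \<noteq> \<sigma> (vs ! i) \<longrightarrow> s \<in> used))" ..
  then obtain vs where H: "linear_order_on (\<sigma> ` V) r \<and> distinct vs \<and> set vs = V \<and>
       (\<forall>i < length vs.
          let used = {\<sigma> (vs ! j) | j. j < i \<and> {vs ! j, vs ! i} \<in> E} in
          \<sigma> (vs ! i) \<notin> used \<and>
          (\<forall>s \<in> \<sigma> ` V. (s, \<sigma> (vs ! i)) \<in> r \<and> s \<noteq> \<sigma> (vs ! i) \<longrightarrow> s \<in> used))" ..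
  have lo: "linear_order_on (\<sigma> ` V) r" using H by (rule conjunct1)
  have sv: "set vs = V" using H[THEN conjunct2, THEN conjunct2] by (rule conjunct1)
  have g: "\<forall>i < length vs.
          let used = {\<sigma> (vs ! j) | j. j < i \<and> {vs ! j, vs ! i} \<in> E} in
          \<sigma> (vs ! i) \<notin> used \<and>
          (\<forall>s \<in> \<sigma> ` V. (s, \<sigma> (vs ! i)) \<in> r \<and> s \<noteq> \<sigma> (vs ! i) \<longrightarrow> s \<in> used)"
    using H[THEN conjunct2, THEN conjunct2] by (rule conjunct2)
  have gr: "\<forall>v\<in>V. \<forall>s\<in>\<sigma>`V. (s,\<sigma> v)\<in>r \<and> s\<noteq>\<sigma> v \<longrightarrow> (\<exists>w. {w,v}\<in>E \<and> \<sigma> w = s)"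
  proof (intro ballI impI)
    fix v s assume v: "v \<in> V" and s: "s \<in> \<sigma>`V" and h: "(s,\<sigma> v)\<in>r \<and> s\<noteq>\<sigma> v"
    obtain i where i: "i < length vs" "vs ! i = v" using v sv by (metis in_set_conv_nth)
    have gi: "let used = {\<sigma> (vs ! j) | j. j < i \<and> {vs ! j, vs ! i} \<in> E} in
          \<sigma> (vs ! i) \<notin> used \<and>
          (\<forall>s \<in> \<sigma> ` V. (s, \<sigma> (vs ! i)) \<in> r \<and> s \<noteq> \<sigma> (vs ! i) \<longrightarrow> s \<in> used)"
      using spec[OF g, of i] i(1) by (rule mp)
    then have "\<forall>s \<in> \<sigma> ` V. (s, \<sigma> (vs ! i)) \<in> r \<and> s \<noteq> \<sigma> (vs ! i) \<longrightarrow>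
        s \<in> {\<sigma> (vs ! j) | j. j < i \<and> {vs ! j, vs ! i} \<in> E}"
      unfolding Let_def by (rule conjunct2)
    then have "s \<in> {\<sigma> (vs ! j) | j. j < i \<and> {vs ! j, vs ! i} \<in> E}"
      using s h i(2) by blast
    then show "\<exists>w. {w,v}\<in>E \<and> \<sigma> w = s" using i(2) by blast
  qed
  have tot: "\<forall>a\<in>\<sigma>`V. \<forall>b\<in>\<sigma>`V. a\<noteq>b \<longrightarrow> (a,b)\<in>r \<or> (b,a)\<in>r"
  proof (intro ballI impI)
    fix a b assume "a \<in> \<sigma>`V" "b \<in> \<sigma>`V" "a \<noteq> b"
    moreover have "total_on (\<sigma>`V) r" using lo unfolding linear_order_on_def by (rule conjunct2)
    ultimately show "(a,b)\<in>r \<or> (b,a)\<in>r" unfolding total_on_def by blast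
  qed
  have ok: "cotree_ok (V,E) T" and lv: "leaves T = V" using assms(3) unfolding binary_cotree_def by auto
  have l1: "leaves T \<subseteq> V" using lv by (rule equalityD1)
  have l2: "\<forall>z\<in>V - leaves T. (\<forall>y\<in>leaves T. {z,y}\<in>E) \<or> (\<forall>y\<in>leaves T. {z,y}\<notin>E)"
    unfolding lv by simp
  show ?thesis by (rule main[OF pc assms(1) gr tot ok l1 l2])
qed

end
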